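(* Let $p_0$ be a probability density on $[0,\infty)$ with $\int_0^\infty x\,p_0(x)\,dx=w$, and suppose that for some $\alpha>1$, $\int_0^\infty x^\alpha p_0(x)\,dx<\infty$. Define $p_{t+1}=T[p_t]$ for $t=0,1,2,\dots$. Then for all $x\ge 0$, $$\lim_{t\to\infty}\int_0^x p_t(u)\,du=\int_0^x p_w(u)\,du,\qquad\text{where } p_w(u)=\frac{4}{w^2}\,u\,e^{-\frac{2}{w}u}.$$
   Context: For a probability density $p$ on $[0,\infty)$ define $S[p](x)=\int_x^\infty \frac{p(u)}{u}\,du$ for $x\ge 0$, and $T[p](x)=(S[p]*S[p])(x)=\int_0^x S[p](x-v)\,S[p](v)\,dv$. *)

theory Defs
  imports "HOL-Analysis.Analysis"
begin

definition S_op :: "(real \<Rightarrow> real) \<Rightarrow> real \<Rightarrow> real" where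
  "S_op p x = (LBINT u:{x<..}. p u / u)"

definition T_op :: "(real \<Rightarrow> real) \<Rightarrow> real \<Rightarrow> real" where
  "T_op p x = (LBINT v:{0..x}. S_op p (x - v) * S_op p v)"

end

theory Submission
  imports Defs "HOL-Probability.Probability"
begin

abbreviation dens :: "(real \<Rightarrow> real) \<Rightarrow> real measure" where
  "dens p \<equiv> density lborel (\<lambda>x. ennreal (p x))"

definition goodp :: "(real \<Rightarrow> real) \<Rightarrow> bool" where
  "goodp p \<longleftrightarrow> p \<in> borel_measurable borel \<and> (\<forall>x. 0 \<le> p x) \<and> (\<forall>x<0. p x = 0) \<and> prob_space (dens p)"

definition Sd :: "(real \<Rightarrow> real) \<Rightarrow> real \<Rightarrow> real" where
  "Sd p x = (if 0 < x then S_op p x else 0)"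

lemma S_op_alt: "S_op p x = (\<integral>u. (if x < u then p u / u else 0) \<partial>lborel)"
  unfolding S_op_def set_lebesgue_integral_def by (intro Bochner_Integration.integral_cong) (auto simp: indicator_def)

lemma S_op_meas[measurable]: assumes [measurable]: "p \<in> borel_measurable borel" shows "S_op p \<in> borel_measurable borel"
proof -
  have "(\<lambda>z::real\<times>real. (if fst z < snd z then p (snd z) / snd z else 0)) \<in> borel_measurable (borel \<Otimes>\<^sub>M lborel)"
    by measurable
  then show ?thesis
    unfolding S_op_alt[abs_def]
    by (intro lborel.borel_measurable_lebesgue_integral) (simp add: case_prod_beta')
qed

lemma Sd_meas[measurable]: assumes [measurable]: "p \<in> borel_measurable borel" shows "Sd p \<in> borel_measurable borel"
  unfolding Sd_def[abs_def] by measurable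

lemma S_op_nonneg: "(\<And>x. 0 \<le> p x) \<Longrightarrow> 0 \<le> x \<Longrightarrow> 0 \<le> S_op p x"
  unfolding S_op_alt
  by (intro integral_nonneg_AE AE_I2) (auto intro: divide_nonneg_pos)

lemma Sd_nonneg: "(\<And>x. 0 \<le> p x) \<Longrightarrow> 0 \<le> Sd p x"
  unfolding Sd_def using S_op_nonneg[of p x] by auto

lemma goodp_total: "goodp p \<Longrightarrow> (\<integral>\<^sup>+x. ennreal (p x) \<partial>lborel) = 1"
proof -
  assume g: "goodp p"
  then interpret prob_space "dens p" by (simp add: goodp_def)
  have [measurable]: "p \<in> borel_measurable borel" using g by (simp add: goodp_def)
  have "emeasure (dens p) UNIV = 1" using emeasure_space_1 by simp
  then show ?thesis by (simp add: emeasure_density)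
qed

lemma S_nn:
  assumes g: "goodp p" and x: "0 < x"
  shows "ennreal (S_op p x) = (\<integral>\<^sup>+u. ennreal (if x < u then p u / u else 0) \<partial>lborel)"
proof -
  have [measurable]: "p \<in> borel_measurable borel" and nn: "\<And>x. 0 \<le> p x" using g by (auto simp: goodp_def)
  have "(\<integral>\<^sup>+u. ennreal (if x < u then p u / u else 0) \<partial>lborel) \<le> (\<integral>\<^sup>+u. ennreal (1/x) * ennreal (p u) \<partial>lborel)"
  proof (intro nn_integral_mono)
    fix u show "ennreal (if x < u then p u / u else 0) \<le> ennreal (1/x) * ennreal (p u)"
    proof (cases "x < u")
      case True
      have "p u / u \<le> p u / x" using True x nn[of u] by (intro divide_left_mono) auto
      then show ?thesis using True x nn[of u] by (simp add: ennreal_mult[symmetric])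
    qed simp
  qed
  also have "\<dots> = ennreal (1/x)" by (simp add: nn_integral_cmult goodp_total[OF g])
  also have "\<dots> < \<infinity>" by simp
  finally have fin: "(\<integral>\<^sup>+u. ennreal (if x < u then p u / u else 0) \<partial>lborel) < \<infinity>" .
  have m: "(\<lambda>u. if x < u then p u / u else 0) \<in> borel_measurable lborel" by measurable
  have a: "AE u in lborel. 0 \<le> (if x < u then p u / u else 0)"
  proof (rule AE_I2)
    fix u show "0 \<le> (if x < u then p u / u else 0)"
      using nn[of u] x by (cases "x < u") auto
  qed
  have "S_op p x = enn2real (\<integral>\<^sup>+u. ennreal (if x < u then p u / u else 0) \<partial>lborel)"
    unfolding S_op_alt by (rule integral_eq_nn_integral[OF m a])
  then show ?thesis using fin by simp
qed

definition U :: "real measure" where "U = density lborel (indicator {0..1::real})"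

lemma prob_U: "prob_space U"
  unfolding U_def by (intro prob_spaceI) (simp add: emeasure_density)

lemma sets_U[simp]: "sets U = sets borel" by (simp add: U_def)

lemma goodp_D: assumes "goodp p" shows "p \<in> borel_measurable borel" "\<And>x. 0 \<le> p x" "\<And>x. x < 0 \<Longrightarrow> p x = 0" "prob_space (dens p)"
  using assms by (auto simp: goodp_def)

lemma L2:
  assumes g: "goodp p"
  shows "density lborel (\<lambda>x. ennreal (Sd p x)) = distr (U \<Otimes>\<^sub>M dens p) borel (\<lambda>(v,u). v * u)"
proof (rule measure_eqI)
  have [measurable]: "p \<in> borel_measurable borel" and nn: "\<And>x. 0 \<le> p x" and neg: "\<And>x. x < 0 \<Longrightarrow> p x = 0"
    using goodp_D[OF g] by auto
  interpret P: prob_space "dens p" using goodp_D[OF g] by auto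
  interpret UP: prob_space U by (rule prob_U)
  interpret PP: pair_prob_space U "dens p" ..
  show "sets (density lborel (\<lambda>x. ennreal (Sd p x))) = sets (distr (U \<Otimes>\<^sub>M dens p) borel (\<lambda>(v,u). v * u))"
    by simp
  fix A assume "A \<in> sets (density lborel (\<lambda>x. ennreal (Sd p x)))"
  then have [measurable]: "A \<in> sets borel" by simp
  define F where "F x u = ennreal (if 0 < x \<and> x < u then p u / u else 0) * indicator A x" for x u :: real
  have Fm[measurable]: "(\<lambda>(x, u). F x u) \<in> borel_measurable (lborel \<Otimes>\<^sub>M lborel)"
    unfolding F_def by measurable
  have "emeasure (density lborel (\<lambda>x. ennreal (Sd p x))) A = (\<integral>\<^sup>+x. ennreal (Sd p x) * indicator A x \<partial>lborel)"
    by (simp add: emeasure_density)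
  also have "\<dots> = (\<integral>\<^sup>+x. (\<integral>\<^sup>+u. F x u \<partial>lborel) \<partial>lborel)"
  proof (intro nn_integral_cong)
    fix x :: real
    show "ennreal (Sd p x) * indicator A x = (\<integral>\<^sup>+u. F x u \<partial>lborel)"
    proof (cases "0 < x")
      case True
      have "ennreal (Sd p x) * indicator A x = (\<integral>\<^sup>+u. ennreal (if x < u then p u / u else 0) \<partial>lborel) * indicator A x"
        using S_nn[OF g True] True by (simp add: Sd_def)
      also have "\<dots> = (\<integral>\<^sup>+u. ennreal (if x < u then p u / u else 0) * indicator A x \<partial>lborel)"
        by (rule nn_integral_multc[symmetric]) measurable
      also have "\<dots> = (\<integral>\<^sup>+u. F x u \<partial>lborel)"
        using True by (intro nn_integral_cong) (simp add: F_def)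
      finally show ?thesis .
    next
      case False
      then show ?thesis by (simp add: F_def Sd_def)
    qed
  qed
  also have "\<dots> = (\<integral>\<^sup>+u. (\<integral>\<^sup>+x. F x u \<partial>lborel) \<partial>lborel)"
    by (rule lborel_pair.Fubini'[symmetric]) (rule Fm)
  also have "\<dots> = (\<integral>\<^sup>+u. (\<integral>\<^sup>+v. indicator {0..1} v * (ennreal (p u) * indicator A (v * u)) \<partial>lborel) \<partial>lborel)"
  proof (intro nn_integral_cong_AE)
    have "AE u in lborel. u \<noteq> 0" by (rule AE_lborel_singleton)
    then show "AE u in lborel. (\<integral>\<^sup>+x. F x u \<partial>lborel) = (\<integral>\<^sup>+v. indicator {0..1} v * (ennreal (p u) * indicator A (v * u)) \<partial>lborel)"
    proof eventually_elim
      fix u :: real assume "u \<noteq> 0"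
      show "(\<integral>\<^sup>+x. F x u \<partial>lborel) = (\<integral>\<^sup>+v. indicator {0..1} v * (ennreal (p u) * indicator A (v * u)) \<partial>lborel)"
      proof (cases "u < 0")
        case True
        then have "\<And>x. F x u = 0" by (auto simp: F_def)
        then show ?thesis using True by (simp add: neg)
      next
        case False
        with \<open>u \<noteq> 0\<close> have u: "0 < u" by simp
        have "(\<integral>\<^sup>+x. F x u \<partial>lborel) = ennreal \<bar>u\<bar> * (\<integral>\<^sup>+v. F (0 + u * v) u \<partial>lborel)"
          using u by (intro nn_integral_real_affine) (auto simp: F_def)
        also have "\<dots> = (\<integral>\<^sup>+v. ennreal u * F (u * v) u \<partial>lborel)"
          using u by (subst nn_integral_cmult) (auto simp: F_def)
        also have "\<dots> = (\<integral>\<^sup>+v. indicator {0..1} v * (ennreal (p u) * indicator A (v * u)) \<partial>lborel)"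
        proof (intro nn_integral_cong_AE)
          have "AE v in lborel. v \<noteq> 0" "AE v in lborel. v \<noteq> 1" by (rule AE_lborel_singleton)+
          then show "AE v in lborel. ennreal u * F (u * v) u = indicator {0..1} v * (ennreal (p u) * indicator A (v * u))"
          proof eventually_elim
            fix v :: real assume v: "v \<noteq> 0" "v \<noteq> 1"
            show "ennreal u * F (u * v) u = indicator {0..1} v * (ennreal (p u) * indicator A (v * u))"
            proof (cases "0 < v \<and> v < 1")
              case True
              then have "0 < u * v \<and> u * v < u" using u by (simp add: mult_pos_pos)
              moreover have "ennreal u * ennreal (p u / u) = ennreal (p u)"
                using u nn[of u] by (simp add: ennreal_mult[symmetric])
              ultimately show ?thesis using True by (simp add: F_def mult.assoc[symmetric] mult.commute[of v u])
            next
              case False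
              then have "\<not> (0 < u * v \<and> u * v < u)" using u
                by (auto simp: zero_less_mult_iff mult_less_cancel_left1)
              moreover have "v \<notin> {0..1}" using False v by auto
              ultimately show ?thesis unfolding F_def by auto
            qed
          qed
        qed
        finally show ?thesis .
      qed
    qed
  qed
  also have "\<dots> = (\<integral>\<^sup>+v. (\<integral>\<^sup>+u. indicator {0..1} v * (ennreal (p u) * indicator A (v * u)) \<partial>lborel) \<partial>lborel)"
    by (rule lborel_pair.Fubini') measurable
  also have "\<dots> = (\<integral>\<^sup>+v. indicator {0..1} v * (\<integral>\<^sup>+u. ennreal (p u) * indicator A (v * u) \<partial>lborel) \<partial>lborel)"
    by (intro nn_integral_cong nn_integral_cmult) measurable
  also have "\<dots> = (\<integral>\<^sup>+v. (\<integral>\<^sup>+u. indicator A (v * u) \<partial>dens p) \<partial>U)"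
    unfolding U_def by (simp add: nn_integral_density)
  also have "\<dots> = (\<integral>\<^sup>+z. indicator A ((\<lambda>(v,u). v * u) z) \<partial>(U \<Otimes>\<^sub>M dens p))"
  proof -
    have m: "(\<lambda>z::real\<times>real. indicator A (fst z * snd z) :: ennreal) \<in> borel_measurable (borel \<Otimes>\<^sub>M borel)"
      by measurable
    have s: "sets (U \<Otimes>\<^sub>M dens p) = sets (borel \<Otimes>\<^sub>M borel)"
      by (intro sets_pair_measure_cong) auto
    have "(\<lambda>z::real\<times>real. indicator A (fst z * snd z) :: ennreal) \<in> borel_measurable (U \<Otimes>\<^sub>M dens p)"
      unfolding measurable_cong_sets[OF s refl] by (rule m)
    then show ?thesis
      by (subst P.nn_integral_fst[symmetric]) (auto simp: case_prod_beta')
  qed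
  also have "\<dots> = emeasure (distr (U \<Otimes>\<^sub>M dens p) borel (\<lambda>(v,u). v * u)) A"
  proof -
    have s: "sets (U \<Otimes>\<^sub>M dens p) = sets (borel \<Otimes>\<^sub>M borel)"
      by (intro sets_pair_measure_cong) auto
    have mm: "(\<lambda>(v,u). v * u :: real) \<in> measurable (U \<Otimes>\<^sub>M dens p) borel"
      unfolding measurable_cong_sets[OF s refl] by measurable
    have "emeasure (distr (U \<Otimes>\<^sub>M dens p) borel (\<lambda>(v,u). v * u)) A =
       emeasure (U \<Otimes>\<^sub>M dens p) ((\<lambda>(v,u). v * u) -` A \<inter> space (U \<Otimes>\<^sub>M dens p))"
      by (rule emeasure_distr[OF mm]) simp
    also have "\<dots> = (\<integral>\<^sup>+z. indicator ((\<lambda>(v,u). v * u) -` A \<inter> space (U \<Otimes>\<^sub>M dens p)) z \<partial>(U \<Otimes>\<^sub>M dens p))"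
      by (rule nn_integral_indicator[symmetric]) (rule measurable_sets[OF mm], simp)
    also have "\<dots> = (\<integral>\<^sup>+z. indicator A ((\<lambda>(v,u). v * u) z) \<partial>(U \<Otimes>\<^sub>M dens p))"
      by (intro nn_integral_cong) (auto simp: indicator_def)
    finally show ?thesis by simp
  qed
  finally show "emeasure (density lborel (\<lambda>x. ennreal (Sd p x))) A = emeasure (distr (U \<Otimes>\<^sub>M dens p) borel (\<lambda>(v,u). v * u)) A" .
qed

lemma goodp_Sd: assumes g: "goodp p" shows "goodp (Sd p)"
proof -
  have [measurable]: "p \<in> borel_measurable borel" and nn: "\<And>x. 0 \<le> p x" using goodp_D[OF g] by auto
  interpret P: prob_space "dens p" using goodp_D[OF g] by auto
  interpret UP: prob_space U by (rule prob_U)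
  interpret PP: pair_prob_space U "dens p" ..
  have s: "sets (U \<Otimes>\<^sub>M dens p) = sets (borel \<Otimes>\<^sub>M borel)"
    by (intro sets_pair_measure_cong) auto
  have mm: "(\<lambda>(v,u). v * u :: real) \<in> measurable (U \<Otimes>\<^sub>M dens p) borel"
    unfolding measurable_cong_sets[OF s refl] by measurable
  have "prob_space (distr (U \<Otimes>\<^sub>M dens p) borel (\<lambda>(v,u). v * u))"
    by (rule PP.prob_space_distr[OF mm])
  then show ?thesis unfolding goodp_def L2[OF g, symmetric]
    using S_op_nonneg[of p, OF nn] by (auto simp: Sd_nonneg nn Sd_def)
qed

lemma L3:
  assumes g: "goodp p"
  shows "char (dens (Sd p)) t = (\<integral>v. char (dens p) (t * v) \<partial>U)"
proof -
  have [measurable]: "p \<in> borel_measurable borel" and nn: "\<And>x. 0 \<le> p x" using goodp_D[OF g] by auto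
  interpret P: prob_space "dens p" using goodp_D[OF g] by auto
  interpret UP: prob_space U by (rule prob_U)
  interpret PP: pair_prob_space U "dens p" ..
  have s: "sets (U \<Otimes>\<^sub>M dens p) = sets (borel \<Otimes>\<^sub>M borel)"
    by (intro sets_pair_measure_cong) auto
  have mm: "(\<lambda>(v,u). v * u :: real) \<in> measurable (U \<Otimes>\<^sub>M dens p) borel"
    unfolding measurable_cong_sets[OF s refl] by measurable
  have mi: "(\<lambda>z::real\<times>real. iexp (t * (fst z * snd z))) \<in> borel_measurable (U \<Otimes>\<^sub>M dens p)"
    unfolding measurable_cong_sets[OF s refl] by measurable
  have int: "integrable (U \<Otimes>\<^sub>M dens p) (\<lambda>z::real\<times>real. iexp (t * (fst z * snd z)))"
    by (intro PP.integrable_const_bound[where B=1] mi AE_I2) (simp del: of_real_mult)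
  have "char (dens (Sd p)) t = char (distr (U \<Otimes>\<^sub>M dens p) borel (\<lambda>(v,u). v * u)) t"
    by (simp add: L2[OF g])
  also have "\<dots> = (\<integral>z. iexp (t * (fst z * snd z)) \<partial>(U \<Otimes>\<^sub>M dens p))"
    unfolding char_def by (subst integral_distr[OF mm]) (auto simp: case_prod_beta')
  also have "\<dots> = (\<integral>v. (\<integral>u. iexp (t * (v * u)) \<partial>dens p) \<partial>U)"
    using PP.integral_fst'[OF int] by simp
  also have "\<dots> = (\<integral>v. char (dens p) (t * v) \<partial>U)"
    unfolding char_def by (simp add: mult.assoc)
  finally show ?thesis .
qed

lemma char_conv:
  assumes A: "real_distribution A" and B: "real_distribution B"
  shows "char (A \<star> B) t = char A t * char B t"
proof -
  interpret A: real_distribution A by fact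
  interpret B: real_distribution B by fact
  interpret AB: pair_prob_space A B ..
  have s: "sets (A \<Otimes>\<^sub>M B) = sets (borel \<Otimes>\<^sub>M borel)"
    by (intro sets_pair_measure_cong) auto
  have mm: "(\<lambda>(x,y). x + y :: real) \<in> measurable (A \<Otimes>\<^sub>M B) borel"
    unfolding measurable_cong_sets[OF s refl] by measurable
  have mi: "(\<lambda>z::real\<times>real. iexp (t * (fst z + snd z))) \<in> borel_measurable (A \<Otimes>\<^sub>M B)"
    unfolding measurable_cong_sets[OF s refl] by measurable
  have int: "integrable (A \<Otimes>\<^sub>M B) (\<lambda>z::real\<times>real. iexp (t * (fst z + snd z)))"
    by (intro AB.integrable_const_bound[where B=1] mi AE_I2) (simp del: of_real_mult)
  have "char (A \<star> B) t = (\<integral>z. iexp (t * (fst z + snd z)) \<partial>(A \<Otimes>\<^sub>M B))"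
    unfolding char_def convolution_def by (subst integral_distr[OF mm]) (auto simp: case_prod_beta')
  also have "\<dots> = (\<integral>x. (\<integral>y. iexp (t * (x + y)) \<partial>B) \<partial>A)"
    using AB.integral_fst'[OF int] by simp
  also have "\<dots> = (\<integral>x. iexp (t * x) * char B t \<partial>A)"
    unfolding char_def
    by (intro Bochner_Integration.integral_cong refl)
       (simp add: distrib_left exp_add algebra_simps del: of_real_mult)
  also have "\<dots> = char A t * char B t"
    unfolding char_def by simp
  finally show ?thesis .
qed

lemma L4:
  assumes g: "goodp p"
  shows "T_op p x = enn2real (\<integral>\<^sup>+y. ennreal (Sd p (x - y) * Sd p y) \<partial>lborel)"
proof -
  have [measurable]: "p \<in> borel_measurable borel" and nn: "\<And>x. 0 \<le> p x" using goodp_D[OF g] by auto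
  have "T_op p x = (\<integral>v. indicator {0..x} v * (S_op p (x - v) * S_op p v) \<partial>lborel)"
    unfolding T_op_def set_lebesgue_integral_def by simp
  also have "\<dots> = (\<integral>v. Sd p (x - v) * Sd p v \<partial>lborel)"
  proof (intro integral_cong_AE)
    show "(\<lambda>v. indicator {0..x} v * (S_op p (x - v) * S_op p v)) \<in> borel_measurable lborel" by measurable
    show "(\<lambda>v. Sd p (x - v) * Sd p v) \<in> borel_measurable lborel" by measurable
    have "AE v in lborel. v \<noteq> 0" "AE v in lborel. v \<noteq> x" by (rule AE_lborel_singleton)+
    then show "AE v in lborel. indicator {0..x} v * (S_op p (x - v) * S_op p v) = Sd p (x - v) * Sd p v"
    proof eventually_elim
      fix v assume v: "v \<noteq> 0" "v \<noteq> x"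
      show "indicator {0..x} v * (S_op p (x - v) * S_op p v) = Sd p (x - v) * Sd p v"
      proof (cases "0 < v \<and> v < x")
        case True then show ?thesis by (simp add: Sd_def)
      next
        case False
        then have "v \<notin> {0..x}" using v by auto
        moreover have "Sd p (x - v) * Sd p v = 0" using False v by (auto simp: Sd_def)
        ultimately show ?thesis by simp
      qed
    qed
  qed
  also have "\<dots> = enn2real (\<integral>\<^sup>+y. ennreal (Sd p (x - y) * Sd p y) \<partial>lborel)"
    by (rule integral_eq_nn_integral) (auto simp: Sd_nonneg nn)
  finally show ?thesis .
qed

lemma L5:
  assumes g: "goodp p"
  shows "goodp (T_op p)" "dens (T_op p) = (dens (Sd p) \<star> dens (Sd p))"
proof -
  have [measurable]: "p \<in> borel_measurable borel" and nn: "\<And>x. 0 \<le> p x" using goodp_D[OF g] by auto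
  have gS: "goodp (Sd p)" by (rule goodp_Sd[OF g])
  interpret S: prob_space "dens (Sd p)" using goodp_D[OF gS] by auto
  interpret S: real_distribution "dens (Sd p)" by unfold_locales simp
  define c where "c x = (\<integral>\<^sup>+y. ennreal (Sd p (x - y)) * ennreal (Sd p y) \<partial>lborel)" for x
  have fm: "finite_measure (dens (Sd p))" by (rule finite_measureI) (simp add: S.emeasure_space_1)
  have cm[measurable]: "c \<in> borel_measurable borel" unfolding c_def by measurable
  have conv: "(dens (Sd p) \<star> dens (Sd p)) = density lborel c"
    unfolding c_def by (rule convolution_density) (simp_all add: fm)
  interpret SS: pair_prob_space "dens (Sd p)" "dens (Sd p)" ..
  have s: "sets (dens (Sd p) \<Otimes>\<^sub>M dens (Sd p)) = sets (borel \<Otimes>\<^sub>M borel)"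
    by (intro sets_pair_measure_cong) auto
  have mm: "(\<lambda>(x,y). x + y :: real) \<in> measurable (dens (Sd p) \<Otimes>\<^sub>M dens (Sd p)) borel"
    unfolding measurable_cong_sets[OF s refl] by measurable
  have "prob_space (dens (Sd p) \<star> dens (Sd p))"
    unfolding convolution_def by (rule SS.prob_space_distr[OF mm])
  then have pc: "prob_space (density lborel c)" using conv by simp
  then have "emeasure (density lborel c) UNIV = 1"
    using prob_space.emeasure_space_1[OF pc] by simp
  then have "(\<integral>\<^sup>+x. c x \<partial>lborel) = 1" by (simp add: emeasure_density)
  then have fin: "AE x in lborel. c x \<noteq> \<infinity>" by (intro nn_integral_PInf_AE) auto
  have Teq: "T_op p x = enn2real (c x)" for x
    unfolding L4[OF g] c_def
    by (intro arg_cong[where f=enn2real] nn_integral_cong) (simp add: ennreal_mult Sd_nonneg nn)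
  have Tfun: "T_op p = (\<lambda>x. enn2real (c x))" using Teq by auto
  have deq: "dens (T_op p) = density lborel c"
    unfolding Tfun
  proof (intro density_cong)
    show "(\<lambda>x. ennreal (enn2real (c x))) \<in> borel_measurable lborel" by measurable
    show "c \<in> borel_measurable lborel" by measurable
    show "AE x in lborel. ennreal (enn2real (c x)) = c x"
      using fin by eventually_elim (simp add: ennreal_enn2real_if)
  qed
  show "dens (T_op p) = (dens (Sd p) \<star> dens (Sd p))" using deq conv by simp
  have neg: "T_op p x = 0" if "x < 0" for x
    using that unfolding T_op_def set_lebesgue_integral_def by simp
  show "goodp (T_op p)"
    unfolding goodp_def
  proof (intro conjI allI impI)
    show "T_op p \<in> borel_measurable borel" unfolding Tfun by measurable
    show "0 \<le> T_op p x" for x unfolding Tfun by simp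
    show "T_op p x = 0" if "x < 0" for x using neg that by simp
    show "prob_space (dens (T_op p))" using pc deq by simp
  qed
qed

lemma goodp_pw: assumes l: "0 < l" shows "goodp (erlang_density 1 l)"
  unfolding goodp_def
proof (intro conjI allI impI)
  show "erlang_density 1 l \<in> borel_measurable borel" by simp
  show "0 \<le> erlang_density 1 l x" for x using l by simp
  show "erlang_density 1 l x = 0" if "x < 0" for x using that by (simp add: erlang_density_def)
  show "prob_space (dens (erlang_density 1 l))" by (rule prob_space_erlang_density[OF l])
qed

lemma S_pw:
  assumes l: "0 < l" and x: "0 < x"
  shows "S_op (erlang_density 1 l) x = exponential_density l x"
proof -
  interpret E: prob_space "dens (exponential_density l)"
    using prob_space_exponential_density[OF l] by simp
  have e1: "emeasure (dens (exponential_density l)) {..x} = ennreal (1 - exp (- l * x))"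
    using emeasure_erlang_density[OF l, of 0 x] x by (simp add: erlang_CDF_0)
  have "emeasure (dens (exponential_density l)) {..x} + emeasure (dens (exponential_density l)) {x<..}
       = emeasure (dens (exponential_density l)) ({..x} \<union> {x<..})"
    by (rule plus_emeasure) auto
  also have "{..x} \<union> {x<..} = UNIV" by auto
  also have "emeasure (dens (exponential_density l)) UNIV = 1"
    using E.emeasure_space_1 by simp
  finally have sum1: "ennreal (1 - exp (- l * x)) + emeasure (dens (exponential_density l)) {x<..} = 1"
    using e1 by simp
  have ele: "exp (- l * x) \<le> 1" using l x by simp
  have "ennreal (1 - exp (- l * x)) + ennreal (exp (- l * x)) = 1"
    using ele by (subst ennreal_plus[symmetric]) auto
  with sum1 have "ennreal (1 - exp (- l * x)) + emeasure (dens (exponential_density l)) {x<..} = ennreal (1 - exp (- l * x)) + ennreal (exp (- l * x))"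
    by simp
  then have e2: "emeasure (dens (exponential_density l)) {x<..} = ennreal (exp (- l * x))"
    unfolding ennreal_add_left_cancel by simp
  have gp: "goodp (erlang_density 1 l)" by (rule goodp_pw[OF l])
  have "ennreal (S_op (erlang_density 1 l) x) = (\<integral>\<^sup>+u. ennreal (if x < u then erlang_density 1 l u / u else 0) \<partial>lborel)"
    by (rule S_nn[OF gp x])
  also have "\<dots> = (\<integral>\<^sup>+u. ennreal l * (ennreal (exponential_density l u) * indicator {x<..} u) \<partial>lborel)"
  proof (intro nn_integral_cong)
    fix u :: real
    show "ennreal (if x < u then erlang_density 1 l u / u else 0) = ennreal l * (ennreal (exponential_density l u) * indicator {x<..} u)"
    proof (cases "x < u")
      case True
      then have u: "0 < u" using x by simp
      have "erlang_density 1 l u / u = l * exponential_density l u"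
        using u by (simp add: erlang_density_def exponential_density_def power2_eq_square field_simps)
      then show ?thesis using True l u by (simp add: ennreal_mult[symmetric] exponential_density_def)
    qed simp
  qed
  also have "\<dots> = ennreal l * emeasure (dens (exponential_density l)) {x<..}"
    by (subst nn_integral_cmult) (auto simp: emeasure_density)
  also have "\<dots> = ennreal (exponential_density l x)"
    using e2 l x by (simp add: ennreal_mult[symmetric] exponential_density_def mult.commute)
  finally show ?thesis
    using S_op_nonneg[of "erlang_density 1 l" x] l x by (simp add: exponential_density_def)
qed

lemma dens_Sd_pw:
  assumes l: "0 < l"
  shows "dens (Sd (erlang_density 1 l)) = dens (exponential_density l)"
proof (intro density_cong)
  have [measurable]: "erlang_density 1 l \<in> borel_measurable borel" by simp
  show "(\<lambda>x. ennreal (Sd (erlang_density 1 l) x)) \<in> borel_measurable lborel" by measurable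
  show "(\<lambda>x. ennreal (exponential_density l x)) \<in> borel_measurable lborel" by measurable
  have "AE x in lborel. x \<noteq> 0" by (rule AE_lborel_singleton)
  then show "AE x in lborel. ennreal (Sd (erlang_density 1 l) x) = ennreal (exponential_density l x)"
  proof eventually_elim
    fix x :: real assume "x \<noteq> 0"
    then show "ennreal (Sd (erlang_density 1 l) x) = ennreal (exponential_density l x)"
      using S_pw[OF l, of x] by (cases "0 < x") (auto simp: Sd_def exponential_density_def)
  qed
qed

lemma dens_pw_conv:
  assumes l: "0 < l"
  shows "dens (erlang_density 1 l) = (dens (Sd (erlang_density 1 l)) \<star> dens (Sd (erlang_density 1 l)))"
proof -
  interpret E: prob_space "dens (exponential_density l)"
    using prob_space_exponential_density[OF l] by simp
  have fm: "finite_measure (dens (exponential_density l))"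
    by (rule finite_measureI) (simp add: E.emeasure_space_1)
  have "(dens (exponential_density l) \<star> dens (exponential_density l)) =
     density lborel (\<lambda>x. \<integral>\<^sup>+y. ennreal (exponential_density l (x - y)) * ennreal (exponential_density l y) \<partial>lborel)"
    by (rule convolution_density) (simp_all add: fm)
  also have "\<dots> = dens (erlang_density 1 l)"
    using convolution_erlang_density[OF l, of 0 0] by simp
  finally show ?thesis using dens_Sd_pw[OF l] by simp
qed

lemma real_distr_good: assumes g: "goodp p" shows "real_distribution (dens p)"
proof -
  interpret prob_space "dens p" using goodp_D(4)[OF g] .
  show ?thesis by unfold_locales simp
qed

lemma char_T:
  assumes g: "goodp p"
  shows "char (dens (T_op p)) t = (char (dens (Sd p)) t)^2"
  using L5[OF g] char_conv[OF real_distr_good[OF goodp_Sd[OF g]] real_distr_good[OF goodp_Sd[OF g]]]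
  by (simp add: power2_eq_square)

lemma char_pw:
  assumes l: "0 < l"
  shows "char (dens (erlang_density 1 l)) t = (char (dens (Sd (erlang_density 1 l))) t)^2"
  using dens_pw_conv[OF l] char_conv[OF real_distr_good[OF goodp_Sd[OF goodp_pw[OF l]]] real_distr_good[OF goodp_Sd[OF goodp_pw[OF l]]]]
  by (simp add: power2_eq_square)

lemma min_pow_bound:
  fixes y b :: real
  assumes y: "0 \<le> y" and b: "1 \<le> b" "b \<le> 2"
  shows "min (2*y) (y^2/2) \<le> 2 * y powr b"
proof (cases "y \<le> 1")
  case True
  have "y^2 \<le> y powr b"
  proof (cases "y = 0")
    case True then show ?thesis using b by simp
  next
    case False
    then have "y powr 2 = y^2" using y powr_realpow[of y 2] by simp
    moreover have "y powr 2 \<le> y powr b" using powr_mono'[of b 2 y] b y True by simp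
    ultimately show ?thesis by simp
  qed
  moreover have "0 \<le> y powr b" by simp
  ultimately have "y^2/2 \<le> 2 * y powr b" by linarith
  then show ?thesis by (rule order_trans[OF min.cobounded2])
next
  case False
  then have "y powr 1 \<le> y powr b" using powr_mono[of 1 b y] b by simp
  then have "y \<le> y powr b" using y by (simp add: powr_one)
  then show ?thesis by (simp add: min_le_iff_disj)
qed

lemma taylor_bound:
  assumes M: "real_distribution M" and i1: "integrable M (\<lambda>x. x)"
    and ib: "integrable M (\<lambda>x. \<bar>x\<bar> powr b)" and b: "1 \<le> b" "b \<le> 2"
  shows "cmod (char M t - (1 + \<i> * complex_of_real t * complex_of_real (\<integral>x. x \<partial>M)))
     \<le> 2 * \<bar>t\<bar> powr b * (\<integral>x. \<bar>x\<bar> powr b \<partial>M)"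
proof -
  interpret real_distribution M by fact
  have moms: "integrable M (\<lambda>x. x ^ k)" if "k \<le> Suc 0" for k
  proof (cases k)
    case 0 then show ?thesis by simp
  next
    case (Suc k') then have "k = 1" using that by simp
    then show ?thesis using i1 by simp
  qed
  have ca: "cmod (char M t - (\<Sum>k \<le> Suc 0. ((\<i> * t)^k / fact k) * expectation (\<lambda>x. x^k))) \<le>
    (\<bar>t\<bar>^Suc 0 / fact (Suc (Suc 0))) * expectation (\<lambda>x. min (2 * \<bar>x\<bar>^Suc 0 * Suc (Suc 0)) (\<bar>t\<bar> * \<bar>x\<bar>^Suc (Suc 0)))"
    by (rule char_approx2) (rule moms)
  have sum: "(\<Sum>k \<le> Suc 0. ((\<i> * t)^k / fact k) * expectation (\<lambda>x. x^k)) =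
      1 + \<i> * complex_of_real t * complex_of_real (\<integral>x. x \<partial>M)"
    using prob_space by (simp del: space_eq_univ)
  define m where "m x = min (2 * \<bar>x\<bar>^Suc 0 * Suc (Suc 0)) (\<bar>t\<bar> * \<bar>x\<bar>^Suc (Suc 0))" for x :: real
  have im: "integrable M (\<lambda>x. \<bar>t\<bar> / 2 * m x)"
  proof (rule Bochner_Integration.integrable_bound)
    show "integrable M (\<lambda>x. 2 * \<bar>t\<bar> * \<bar>x\<bar>)" using i1 by (intro integrable_mult_right integrable_abs)
    show "(\<lambda>x. \<bar>t\<bar> / 2 * m x) \<in> borel_measurable M" unfolding m_def by measurable
    show "AE x in M. norm (\<bar>t\<bar> / 2 * m x) \<le> norm (2 * \<bar>t\<bar> * \<bar>x\<bar>)"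
    proof (rule AE_I2)
      fix x :: real
      have "0 \<le> m x" "m x \<le> 4 * \<bar>x\<bar>" unfolding m_def by auto
      moreover have "\<bar>t\<bar> * m x \<le> 4 * (\<bar>t\<bar> * \<bar>x\<bar>)"
        using mult_left_mono[OF \<open>m x \<le> 4 * \<bar>x\<bar>\<close>, of "\<bar>t\<bar>"] by simp
      ultimately show "norm (\<bar>t\<bar> / 2 * m x) \<le> norm (2 * \<bar>t\<bar> * \<bar>x\<bar>)"
        by (simp add: abs_mult)
    qed
  qed
  have ib2: "integrable M (\<lambda>x. 2 * \<bar>t\<bar> powr b * \<bar>x\<bar> powr b)" using ib by (intro integrable_mult_right)
  have pt: "\<bar>t\<bar> / 2 * m x \<le> 2 * \<bar>t\<bar> powr b * \<bar>x\<bar> powr b" for x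
  proof -
    have "\<bar>t\<bar> / 2 * m x = min (2 * (\<bar>t\<bar> * \<bar>x\<bar>)) ((\<bar>t\<bar> * \<bar>x\<bar>)^2 / 2)"
      unfolding m_def by (simp add: mult_min_right power2_eq_square field_simps)
    also have "\<dots> \<le> 2 * (\<bar>t\<bar> * \<bar>x\<bar>) powr b" by (rule min_pow_bound[OF _ b]) simp
    also have "\<dots> = 2 * \<bar>t\<bar> powr b * \<bar>x\<bar> powr b" by (simp add: powr_mult)
    finally show ?thesis .
  qed
  have "(\<bar>t\<bar>^Suc 0 / fact (Suc (Suc 0))) * expectation m = expectation (\<lambda>x. \<bar>t\<bar> / 2 * m x)"
    by simp
  also have "\<dots> \<le> expectation (\<lambda>x. 2 * \<bar>t\<bar> powr b * \<bar>x\<bar> powr b)"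
    by (rule integral_mono[OF im ib2 pt])
  also have "\<dots> = 2 * \<bar>t\<bar> powr b * (\<integral>x. \<bar>x\<bar> powr b \<partial>M)" by simp
  finally show ?thesis using ca sum unfolding m_def by simp
qed

lemma U_pow:
  assumes b: "0 \<le> b"
  shows "integrable U (\<lambda>v. \<bar>v\<bar> powr b)" "(\<integral>v. \<bar>v\<bar> powr b \<partial>U) = 1 / (b + 1)"
proof -
  have hi: "((\<lambda>v. v powr b) has_integral (1 / (b+1))) {0..1::real}"
    using has_integral_powr_from_0[of b 1] b by simp
  have hi2: "((\<lambda>v. \<bar>v\<bar> powr b) has_integral (1 / (b+1))) {0..1::real}"
    by (rule has_integral_eq[OF _ hi]) simp
  have "(\<integral>\<^sup>+v. ennreal (indicator {0..1} v * \<bar>v\<bar> powr b) \<partial>lborel) = ennreal (1 / (b+1))"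
    using nn_integral_has_integral_lebesgue[OF _ hi2] by simp
  then have nn: "(\<integral>\<^sup>+v. ennreal (\<bar>v\<bar> powr b) \<partial>U) = ennreal (1 / (b+1))"
    unfolding U_def
    by (subst nn_integral_density) (auto simp: ennreal_mult' indicator_def intro!: nn_integral_cong elim: back_subst[where P="\<lambda>z. z = _"])
  have "has_bochner_integral U (\<lambda>v. \<bar>v\<bar> powr b) (1 / (b+1))"
    by (rule has_bochner_integral_nn_integral) (use nn b in \<open>auto simp: U_def\<close>)
  note h = this
  show "integrable U (\<lambda>v. \<bar>v\<bar> powr b)" using h by (rule integrable.intros)
  show "(\<integral>v. \<bar>v\<bar> powr b \<partial>U) = 1 / (b + 1)" using h by (rule has_bochner_integral_integral_eq)
qed

lemma step:
  assumes gp: "goodp p" and gq: "goodp q"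
    and bnd: "\<And>s. cmod (char (dens p) s - char (dens q) s) \<le> K * \<bar>s\<bar> powr b" and b: "0 \<le> b"
  shows "cmod (char (dens (Sd p)) t ^ 2 - char (dens (Sd q)) t ^ 2) \<le> 2 * K / (b+1) * \<bar>t\<bar> powr b"
proof -
  interpret Dp: real_distribution "dens p" using real_distr_good[OF gp] .
  interpret Dq: real_distribution "dens q" using real_distr_good[OF gq] .
  interpret Sp: real_distribution "dens (Sd p)" using real_distr_good[OF goodp_Sd[OF gp]] .
  interpret Sq: real_distribution "dens (Sd q)" using real_distr_good[OF goodp_Sd[OF gq]] .
  interpret UU: prob_space U by (rule prob_U)
  note [measurable] = Dp.char_measurable Dq.char_measurable
  define A where "A = char (dens (Sd p)) t"
  define B where "B = char (dens (Sd q)) t"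
  have mp: "(\<lambda>v. char (dens p) (t * v)) \<in> borel_measurable U"
    unfolding measurable_cong_sets[OF sets_U refl] by measurable
  have mq: "(\<lambda>v. char (dens q) (t * v)) \<in> borel_measurable U"
    unfolding measurable_cong_sets[OF sets_U refl] by measurable
  have ip: "integrable U (\<lambda>v. char (dens p) (t * v))"
    by (intro UU.integrable_const_bound[where B=1] AE_I2 Dp.cmod_char_le_1 mp)
  have iq: "integrable U (\<lambda>v. char (dens q) (t * v))"
    by (intro UU.integrable_const_bound[where B=1] AE_I2 Dq.cmod_char_le_1 mq)
  have "A - B = (\<integral>v. char (dens p) (t * v) - char (dens q) (t * v) \<partial>U)"
    unfolding A_def B_def L3[OF gp] L3[OF gq] by (rule Bochner_Integration.integral_diff[OF ip iq, symmetric])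
  also have "cmod \<dots> \<le> (\<integral>v. K * \<bar>t\<bar> powr b * \<bar>v\<bar> powr b \<partial>U)"
  proof (rule Bochner_Integration.integral_norm_bound_integral)
    show "integrable U (\<lambda>v. char (dens p) (t * v) - char (dens q) (t * v))" using ip iq by simp
    show "integrable U (\<lambda>v. K * \<bar>t\<bar> powr b * \<bar>v\<bar> powr b)" using U_pow(1)[OF b] by simp
    fix v :: real
    have "cmod (char (dens p) (t * v) - char (dens q) (t * v)) \<le> K * \<bar>t * v\<bar> powr b" by (rule bnd)
    also have "\<dots> = K * \<bar>t\<bar> powr b * \<bar>v\<bar> powr b" by (simp add: abs_mult powr_mult)
    finally show "cmod (char (dens p) (t * v) - char (dens q) (t * v)) \<le> K * \<bar>t\<bar> powr b * \<bar>v\<bar> powr b" .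
  qed
  also have "\<dots> = K * \<bar>t\<bar> powr b / (b + 1)" using U_pow(2)[OF b] by simp
  finally have dAB: "cmod (A - B) \<le> K * \<bar>t\<bar> powr b / (b + 1)" .
  have sAB: "cmod (A + B) \<le> 2"
    using norm_triangle_ineq[of A B] Sp.cmod_char_le_1[of t] Sq.cmod_char_le_1[of t] unfolding A_def B_def by simp
  have "cmod (A^2 - B^2) = cmod (A - B) * cmod (A + B)"
    by (simp add: power2_eq_square norm_mult[symmetric] algebra_simps)
  also have "\<dots> \<le> (K * \<bar>t\<bar> powr b / (b + 1)) * 2"
  proof (rule mult_mono[OF dAB sAB])
    show "0 \<le> K * \<bar>t\<bar> powr b / (b + 1)" using dAB norm_ge_zero[of "A - B"] by linarith
  qed simp
  also have "\<dots> = 2 * K / (b+1) * \<bar>t\<bar> powr b" by simp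
  finally show ?thesis unfolding A_def B_def .
qed

lemma dens_integrable:
  assumes g: "goodp p" and [measurable]: "f \<in> borel_measurable borel"
  shows "integrable (dens p) f \<longleftrightarrow> integrable lborel (\<lambda>x. p x * f x)"
    "integral\<^sup>L (dens p) f = (\<integral>x. p x * f x \<partial>lborel)"
proof -
  have [measurable]: "p \<in> borel_measurable borel" and nn: "\<And>x. 0 \<le> p x" using goodp_D[OF g] by auto
  show "integrable (dens p) f \<longleftrightarrow> integrable lborel (\<lambda>x. p x * f x)"
    by (subst integrable_density) (auto simp: nn)
  show "integral\<^sup>L (dens p) f = (\<integral>x. p x * f x \<partial>lborel)"
    by (subst integral_density) (auto simp: nn)
qed

lemma powr_le_1_plus:
  fixes x :: real
  assumes "0 \<le> x" "0 \<le> b" "b \<le> a"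
  shows "x powr b \<le> 1 + x powr a"
proof (cases "x \<le> 1")
  case True
  then have "x powr b \<le> 1" using assms by (intro powr_le1) auto
  then show ?thesis by (smt (verit) powr_ge_zero)
next
  case False
  then have "x powr b \<le> x powr a" using assms by (intro powr_mono) auto
  then show ?thesis by simp
qed

lemma S_op_cong:
  assumes "\<And>u. 0 < u \<Longrightarrow> p u = q u" and "0 \<le> y"
  shows "S_op p y = S_op q y"
  unfolding S_op_alt using assms by (intro Bochner_Integration.integral_cong) auto

lemma T_op_cong:
  assumes "\<And>u. 0 < u \<Longrightarrow> p u = q u"
  shows "T_op p = T_op q"
proof
  fix z
  show "T_op p z = T_op q z"
    unfolding T_op_def set_lebesgue_integral_def
  proof (intro Bochner_Integration.integral_cong refl)
    fix v :: real
    show "indicator {0..z} v *\<^sub>R (S_op p (z - v) * S_op p v) = indicator {0..z} v *\<^sub>R (S_op q (z - v) * S_op q v)"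
    proof (cases "v \<in> {0..z}")
      case True
      then have "S_op p (z - v) = S_op q (z - v)" "S_op p v = S_op q v"
        by (auto intro!: S_op_cong assms)
      then show ?thesis by simp
    qed simp
  qed
qed

lemma cdf_good:
  assumes g: "goodp p"
  shows "cdf (dens p) x = (LBINT u:{0..x}. p u)"
proof -
  have [measurable]: "p \<in> borel_measurable borel" and nn: "\<And>x. 0 \<le> p x" and neg: "\<And>x. x < 0 \<Longrightarrow> p x = 0"
    using goodp_D[OF g] by auto
  have "cdf (dens p) x = enn2real (emeasure (dens p) {..x})"
    by (simp add: cdf_def measure_def)
  also have "\<dots> = enn2real (\<integral>\<^sup>+u. ennreal (indicator {0..x} u * p u) \<partial>lborel)"
    by (subst emeasure_density) (auto intro!: arg_cong[where f=enn2real] nn_integral_cong simp: indicator_def neg)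
  also have "\<dots> = (LBINT u:{0..x}. p u)"
    unfolding set_lebesgue_integral_def
    by (subst integral_eq_nn_integral) (auto simp: nn)
  finally show ?thesis .
qed

lemma isCont_cdf_good:
  assumes g: "goodp p"
  shows "isCont (cdf (dens p)) x"
proof -
  have [measurable]: "p \<in> borel_measurable borel" using goodp_D[OF g] by auto
  have "emeasure (dens p) {x} = (\<integral>\<^sup>+u. ennreal (p u) * indicator {x} u \<partial>lborel)"
    by (subst emeasure_density) auto
  also have "\<dots> = 0"
  proof (rule nn_integral_zero')
    show "AE u in lborel. ennreal (p u) * indicator {x} u = 0"
      using AE_lborel_singleton[of x] by eventually_elim simp
  qed
  finally have e0: "emeasure (dens p) {x} = 0" .
  interpret D: real_distribution "dens p" using real_distr_good[OF g] .
  show ?thesis unfolding D.isCont_cdf using e0 by (simp add: measure_def)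
qed

lemma powr2: "0 \<le> (x::real) \<Longrightarrow> x powr 2 = x^2"
  using powr_realpow[of x 2] by (cases "x = 0") auto

theorem theorem2:
  fixes p0 :: "real \<Rightarrow> real" and w \<alpha> :: real
  assumes nonneg: "\<And>x. x \<ge> 0 \<Longrightarrow> p0 x \<ge> 0"
    and int_p0: "set_integrable lborel {0..} p0"
    and mass: "(LBINT x:{0..}. p0 x) = 1"
    and int_mean: "set_integrable lborel {0..} (\<lambda>x. x * p0 x)"
    and mean: "(LBINT x:{0..}. x * p0 x) = w"
    and alpha: "\<alpha> > 1"
    and moment: "set_integrable lborel {0..} (\<lambda>x. x powr \<alpha> * p0 x)"
  shows "\<forall>x\<ge>0. (\<lambda>t. LBINT u:{0..x}. (T_op ^^ t) p0 u)
           \<longlonglongrightarrow> (LBINT u:{0..x}. 4 / w\<^sup>2 * u * exp (- (2 / w) * u))"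
proof (intro allI impI)
  fix x :: real assume x: "0 \<le> x"
  define q0 where "q0 = (\<lambda>x. if 0 < x then p0 x else 0)"
  have q0eq: "q0 = (\<lambda>x. indicator {0<..} x *\<^sub>R (indicator {0..} x *\<^sub>R p0 x))"
    by (auto simp: q0_def fun_eq_iff indicator_def)
  have iq0: "integrable lborel q0" unfolding q0eq
    by (rule integrable_mult_indicator) (simp, use int_p0 in \<open>simp add: set_integrable_def\<close>)
  have "q0 \<in> borel_measurable lborel" using iq0 by (rule borel_measurable_integrable)
  then have q0m[measurable]: "q0 \<in> borel_measurable borel" by simp
  have iq0x: "integrable lborel (\<lambda>x. q0 x * x)"
  proof -
    have "(\<lambda>x. q0 x * x) = (\<lambda>x. indicator {0<..} x *\<^sub>R (indicator {0..} x *\<^sub>R (x * p0 x)))"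
      by (auto simp: q0_def fun_eq_iff indicator_def)
    then show ?thesis
      by (simp only:) (rule integrable_mult_indicator, simp, use int_mean in \<open>simp add: set_integrable_def\<close>)
  qed
  have iq0a: "integrable lborel (\<lambda>x. q0 x * x powr \<alpha>)"
  proof -
    have "(\<lambda>x. q0 x * x powr \<alpha>) = (\<lambda>x. indicator {0<..} x *\<^sub>R (indicator {0..} x *\<^sub>R (x powr \<alpha> * p0 x)))"
      by (auto simp: q0_def fun_eq_iff indicator_def)
    then show ?thesis
      by (simp only:) (rule integrable_mult_indicator, simp, use moment in \<open>simp add: set_integrable_def\<close>)
  qed
  have nnq0: "0 \<le> q0 y" for y using nonneg[of y] by (simp add: q0_def)
  have negq0: "q0 y = 0" if "y \<le> 0" for y using that by (simp add: q0_def)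
  have int1: "(\<integral>y. q0 y \<partial>lborel) = 1"
  proof -
    have "(\<integral>y. q0 y \<partial>lborel) = (\<integral>y. indicator {0..} y *\<^sub>R p0 y \<partial>lborel)"
    proof (intro integral_cong_AE)
      show "q0 \<in> borel_measurable lborel" by simp
      show "(\<lambda>y. indicator {0..} y *\<^sub>R p0 y) \<in> borel_measurable lborel"
        using int_p0 unfolding set_integrable_def by (rule borel_measurable_integrable)
      show "AE y in lborel. q0 y = indicator {0..} y *\<^sub>R p0 y"
        using AE_lborel_singleton[of 0] by eventually_elim (auto simp: q0_def indicator_def)
    qed
    also have "\<dots> = 1" using mass unfolding set_lebesgue_integral_def .
    finally show ?thesis .
  qed
  have intw: "(\<integral>y. q0 y * y \<partial>lborel) = w"
  proof -
    have "(\<integral>y. q0 y * y \<partial>lborel) = (\<integral>y. indicator {0..} y *\<^sub>R (y * p0 y) \<partial>lborel)"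
      by (intro Bochner_Integration.integral_cong) (auto simp: q0_def indicator_def)
    also have "\<dots> = w" using mean unfolding set_lebesgue_integral_def .
    finally show ?thesis .
  qed
  have gq0: "goodp q0"
    unfolding goodp_def
  proof (intro conjI allI impI)
    show "q0 \<in> borel_measurable borel" by simp
    show "0 \<le> q0 y" for y by (rule nnq0)
    show "q0 y = 0" if "y < 0" for y using that by (simp add: negq0)
    show "prob_space (dens q0)"
    proof (rule prob_spaceI)
      have "(\<integral>\<^sup>+y. ennreal (q0 y) \<partial>lborel) = ennreal (\<integral>y. q0 y \<partial>lborel)"
        by (rule nn_integral_eq_integral[OF iq0]) (simp add: nnq0)
      then show "emeasure (dens q0) (space (dens q0)) = 1"
        by (simp add: emeasure_density int1)
    qed
  qed
  have wpos: "0 < w"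
  proof -
    have nn0: "AE y in lborel. 0 \<le> q0 y * y"
    proof (rule AE_I2)
      fix y :: real show "0 \<le> q0 y * y" using nnq0[of y] negq0[of y] by (cases "0 < y") auto
    qed
    have "0 \<le> w" unfolding intw[symmetric] by (rule integral_nonneg_AE[OF nn0])
    moreover have "w \<noteq> 0"
    proof
      assume "w = 0"
      then have "AE y in lborel. q0 y * y = 0"
        using integral_nonneg_eq_0_iff_AE[OF iq0x nn0] intw by simp
      then have "AE y in lborel. q0 y = 0"
        using AE_lborel_singleton[of 0] by eventually_elim auto
      then have "(\<integral>y. q0 y \<partial>lborel) = 0" by (rule integral_eq_zero_AE)
      then show False using int1 by simp
    qed
    ultimately show ?thesis by simp
  qed
  define l where "l = 2 / w"
  have lpos: "0 < l" using wpos by (simp add: l_def)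
  define pw where "pw = erlang_density 1 l"
  have gpw: "goodp pw" unfolding pw_def by (rule goodp_pw[OF lpos])
  have pwm[measurable]: "pw \<in> borel_measurable borel" unfolding pw_def by simp
  have nnpw: "0 \<le> pw y" for y using lpos by (simp add: pw_def)
  have negpw: "pw y = 0" if "y < 0" for y using that by (simp add: pw_def erlang_density_def)
  define \<beta> where "\<beta> = min \<alpha> 2"
  have b1: "1 < \<beta>" "\<beta> \<le> 2" "\<beta> \<le> \<alpha>" using alpha by (auto simp: \<beta>_def)
  define P where "P n = (T_op ^^ n) q0" for n
  have PSuc: "P (Suc n) = T_op (P n)" for n by (simp add: P_def)
  have gP: "goodp (P n)" for n
    by (induction n) (auto simp: PSuc P_def[of 0] gq0 intro: L5(1))

  have mq1: "integrable (dens q0) (\<lambda>y. y)" using dens_integrable(1)[OF gq0, of "\<lambda>y. y"] iq0x by simp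
  have Eq1: "(\<integral>y. y \<partial>dens q0) = w" using dens_integrable(2)[OF gq0, of "\<lambda>y. y"] intw by simp
  have mqb: "integrable (dens q0) (\<lambda>y. \<bar>y\<bar> powr \<beta>)"
  proof -
    have "integrable lborel (\<lambda>y. q0 y * \<bar>y\<bar> powr \<beta>)"
    proof (rule Bochner_Integration.integrable_bound)
      show "integrable lborel (\<lambda>y. q0 y + q0 y * y powr \<alpha>)" using iq0 iq0a by simp
      show "(\<lambda>y. q0 y * \<bar>y\<bar> powr \<beta>) \<in> borel_measurable lborel" by measurable
      show "AE y in lborel. norm (q0 y * \<bar>y\<bar> powr \<beta>) \<le> norm (q0 y + q0 y * y powr \<alpha>)"
      proof (rule AE_I2)
        fix y :: real
        show "norm (q0 y * \<bar>y\<bar> powr \<beta>) \<le> norm (q0 y + q0 y * y powr \<alpha>)"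
        proof (cases "0 < y")
          case True
          have "\<bar>y\<bar> powr \<beta> \<le> 1 + y powr \<alpha>" using True b1 powr_le_1_plus[of y \<beta> \<alpha>] by simp
          then have "q0 y * \<bar>y\<bar> powr \<beta> \<le> q0 y * (1 + y powr \<alpha>)" by (rule mult_left_mono) (rule nnq0)
          moreover have "0 \<le> q0 y * \<bar>y\<bar> powr \<beta>" by (simp add: nnq0)
          ultimately show ?thesis by (simp add: algebra_simps)
        qed (simp add: negq0)
      qed
    qed
    then show ?thesis using dens_integrable(1)[OF gq0, of "\<lambda>y. \<bar>y\<bar> powr \<beta>"] by simp
  qed
  have hb0: "has_bochner_integral lborel (\<lambda>y. pw y) 1"
  proof (rule has_bochner_integral_nn_integral)
    show "(\<integral>\<^sup>+y. ennreal (pw y) \<partial>lborel) = ennreal 1"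
      using goodp_total[OF gpw] by simp
  qed (auto simp: nnpw)
  have hb1: "has_bochner_integral lborel (\<lambda>y. pw y * y) w"
  proof (rule has_bochner_integral_nn_integral)
    show "(\<integral>\<^sup>+y. ennreal (pw y * y) \<partial>lborel) = ennreal w"
      using nn_integral_erlang_ith_moment[OF lpos, of 1 1] wpos by (simp add: pw_def l_def)
    show "AE y in lborel. 0 \<le> pw y * y"
    proof (rule AE_I2)
      fix y :: real show "0 \<le> pw y * y" using nnpw[of y] negpw[of y] by (cases "0 \<le> y") auto
    qed
  qed (use wpos in auto)
  have hb2: "has_bochner_integral lborel (\<lambda>y. pw y * y^2) (6 / l^2)"
  proof (rule has_bochner_integral_nn_integral)
    show "(\<integral>\<^sup>+y. ennreal (pw y * y^2) \<partial>lborel) = ennreal (6 / l^2)"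
      using nn_integral_erlang_ith_moment[OF lpos, of 1 2] by (simp add: pw_def fact_numeral)
  qed (auto simp: nnpw)
  have mw1: "integrable (dens pw) (\<lambda>y. y)"
    using dens_integrable(1)[OF gpw, of "\<lambda>y. y"] hb1 integrable.intros by auto
  have Ew1: "(\<integral>y. y \<partial>dens pw) = w"
    using dens_integrable(2)[OF gpw, of "\<lambda>y. y"] has_bochner_integral_integral_eq[OF hb1] by simp
  have mwb: "integrable (dens pw) (\<lambda>y. \<bar>y\<bar> powr \<beta>)"
  proof -
    have "integrable lborel (\<lambda>y. pw y * \<bar>y\<bar> powr \<beta>)"
    proof (rule Bochner_Integration.integrable_bound)
      show "integrable lborel (\<lambda>y. pw y + pw y * y^2)"
        using integrable.intros[OF hb0] integrable.intros[OF hb2] by simp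
      show "(\<lambda>y. pw y * \<bar>y\<bar> powr \<beta>) \<in> borel_measurable lborel" by measurable
      show "AE y in lborel. norm (pw y * \<bar>y\<bar> powr \<beta>) \<le> norm (pw y + pw y * y^2)"
      proof (rule AE_I2)
        fix y :: real
        show "norm (pw y * \<bar>y\<bar> powr \<beta>) \<le> norm (pw y + pw y * y^2)"
        proof (cases "0 \<le> y")
          case True
          have "\<bar>y\<bar> powr \<beta> \<le> 1 + y powr 2" using True b1 powr_le_1_plus[of y \<beta> 2] by simp
          then have "\<bar>y\<bar> powr \<beta> \<le> 1 + y^2" using powr2[OF True] by simp
          then have "pw y * \<bar>y\<bar> powr \<beta> \<le> pw y * (1 + y^2)" by (rule mult_left_mono) (rule nnpw)
          moreover have "0 \<le> pw y * \<bar>y\<bar> powr \<beta>" by (simp add: nnpw)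
          moreover have "0 \<le> pw y * y^2" by (simp add: nnpw)
          ultimately show ?thesis using nnpw[of y] by (simp add: algebra_simps)
        qed (simp add: negpw)
      qed
    qed
    then show ?thesis using dens_integrable(1)[OF gpw, of "\<lambda>y. \<bar>y\<bar> powr \<beta>"] by simp
  qed
  define C0 where "C0 = 2 * (\<integral>y. \<bar>y\<bar> powr \<beta> \<partial>dens q0) + 2 * (\<integral>y. \<bar>y\<bar> powr \<beta> \<partial>dens pw)"
  have base: "cmod (char (dens q0) s - char (dens pw) s) \<le> C0 * \<bar>s\<bar> powr \<beta>" for s
  proof -
    define m where "m = 1 + \<i> * complex_of_real s * complex_of_real w"
    have t1: "cmod (char (dens q0) s - m) \<le> 2 * \<bar>s\<bar> powr \<beta> * (\<integral>y. \<bar>y\<bar> powr \<beta> \<partial>dens q0)"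
      using taylor_bound[OF real_distr_good[OF gq0] mq1 mqb, of s] b1 Eq1 by (simp add: m_def)
    have t2: "cmod (char (dens pw) s - m) \<le> 2 * \<bar>s\<bar> powr \<beta> * (\<integral>y. \<bar>y\<bar> powr \<beta> \<partial>dens pw)"
      using taylor_bound[OF real_distr_good[OF gpw] mw1 mwb, of s] b1 Ew1 by (simp add: m_def)
    have "cmod (char (dens q0) s - char (dens pw) s) = cmod ((char (dens q0) s - m) - (char (dens pw) s - m))"
      by simp
    also have "\<dots> \<le> cmod (char (dens q0) s - m) + cmod (char (dens pw) s - m)"
      by (rule norm_triangle_ineq4)
    also have "\<dots> \<le> C0 * \<bar>s\<bar> powr \<beta>" using t1 t2 by (simp add: C0_def algebra_simps)
    finally show ?thesis .
  qed
  define q where "q = 2 / (\<beta> + 1)"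
  have ind: "\<forall>s. cmod (char (dens (P n)) s - char (dens pw) s) \<le> C0 * q^n * \<bar>s\<bar> powr \<beta>" for n
  proof (induction n)
    case 0 then show ?case using base by (simp add: P_def)
  next
    case (Suc n)
    show ?case
    proof
      fix s
      have "cmod (char (dens (P (Suc n))) s - char (dens pw) s) =
            cmod (char (dens (Sd (P n))) s ^ 2 - char (dens (Sd pw)) s ^ 2)"
        unfolding PSuc char_T[OF gP] pw_def char_pw[OF lpos] ..
      also have "\<dots> \<le> 2 * (C0 * q^n) / (\<beta> + 1) * \<bar>s\<bar> powr \<beta>"
        by (rule step[OF gP gpw]) (use Suc.IH b1 in auto)
      also have "\<dots> = C0 * q ^ Suc n * \<bar>s\<bar> powr \<beta>" by (simp add: q_def)
      finally show "cmod (char (dens (P (Suc n))) s - char (dens pw) s) \<le> C0 * q ^ Suc n * \<bar>s\<bar> powr \<beta>" .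
    qed
  qed
  have q1: "norm q < 1" "0 \<le> q" using b1 by (auto simp: q_def)
  have conv: "(\<lambda>n. char (dens (P n)) s) \<longlonglongrightarrow> char (dens pw) s" for s
  proof (rule LIM_zero_cancel, rule Lim_null_comparison)
    show "\<forall>\<^sub>F n in sequentially. norm (char (dens (P n)) s - char (dens pw) s) \<le> C0 * q^n * \<bar>s\<bar> powr \<beta>"
      using ind by auto
    have "(\<lambda>n. C0 * q^n * \<bar>s\<bar> powr \<beta>) \<longlonglongrightarrow> C0 * 0 * \<bar>s\<bar> powr \<beta>"
      by (intro tendsto_intros q1)
    then show "(\<lambda>n. C0 * q^n * \<bar>s\<bar> powr \<beta>) \<longlonglongrightarrow> 0" by simp
  qed
  have wc: "weak_conv_m (\<lambda>n. dens (P n)) (dens pw)"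
    by (rule levy_continuity[OF real_distr_good[OF gP] real_distr_good[OF gpw] conv])
  have cdfconv: "(\<lambda>n. cdf (dens (P n)) x) \<longlonglongrightarrow> cdf (dens pw) x"
    using wc isCont_cdf_good[OF gpw, of x] unfolding weak_conv_m_def weak_conv_def by blast
  have Tp: "T_op p0 = T_op q0" by (rule T_op_cong) (simp add: q0_def)
  have eqn: "(LBINT u:{0..x}. (T_op ^^ Suc n) p0 u) = cdf (dens (P (Suc n))) x" for n
  proof -
    have "(T_op ^^ Suc n) p0 = (T_op ^^ n) (T_op p0)" by (simp add: funpow_Suc_right del: funpow.simps)
    also have "\<dots> = P (Suc n)" by (simp add: Tp P_def funpow_Suc_right del: funpow.simps)
    finally show ?thesis using cdf_good[OF gP, of "Suc n" x] by simp
  qed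
  have lim: "cdf (dens pw) x = (LBINT u:{0..x}. 4 / w\<^sup>2 * u * exp (- (2 / w) * u))"
    unfolding cdf_good[OF gpw]
    by (intro set_lebesgue_integral_cong) (auto simp: pw_def l_def erlang_density_def power2_eq_square)
  show "(\<lambda>t. LBINT u:{0..x}. (T_op ^^ t) p0 u) \<longlonglongrightarrow> (LBINT u:{0..x}. 4 / w\<^sup>2 * u * exp (- (2 / w) * u))"
    by (rule LIMSEQ_imp_Suc) (unfold eqn lim[symmetric], rule LIMSEQ_Suc[OF cdfconv])
qed

end
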